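(* Let $h\in\mathbb R[x_1,\ldots,x_n]$ be homogeneous of degree $d$ with $h(e)\neq0$ for some $e\in\mathbb R^n$, and let $c_\alpha$, $H_\alpha$ and $\mathcal H_e(h)$ be as in the context. Assume there is a positive linear functional $\varphi\colon\mathbb C\langle z\rangle\to\mathbb C$ (i.e. $\varphi(p^*p)\ge0$ for all $p$) with $\varphi(H_\alpha)=c_\alpha$ for all $\alpha\in\mathbb N^n$ with $|\alpha|\le2(d-1)$. Then $\mathcal H_e(h)$ is a sum of hermitian squares of polynomial matrices, i.e. $\mathcal H_e(h)=\sum_i A_i^*A_i$ for finitely many matrices $A_i$ with entries in $\mathbb C[x_1,\ldots,x_n]$ (where $^*$ is conjugate transposition, coefficientwise conjugation, variables $x_j$ being fixed).
   Context: $h_{a,e}(t):=h(a-te)$. $\mathbb C\langle z\rangle=\mathbb C\langle z_1,\ldots,z_n\rangle$ is the free noncommutative unital algebra with involution determined by $z_i^*=z_i$. For a univariate polynomial $p$ of degree $d$ with complex roots $\lambda_1,\ldots,\lambda_d$, $N_k(p)=\sum_j\lambda_j^k$ is the $k$-th Newton sum. Write $N_k(h_{a,e}(t))=\sum_{|\alpha|=k}c_\alpha a^\alpha$ as a polynomial in $a\in\mathbb R^n$, defining $c_\alpha$. $H_\alpha\in\mathbb C\langle z\rangle$ is the sum of all words in $z_1,\dots,z_n$ containing each $z_i$ exactly $\alpha_i$ times. $\mathcal H_e(h)$ is the $d\times d$ Hermite matrix of $h(x-te)$ as a polynomial in $t$: $\mathcal H_e(h)=(N_{i+j}(h(x-te)))_{i,j=0,\ldots,d-1}$,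 whose entries are polynomials in $x$. *)

theory Defs
  imports Complex_Main "HOL-Library.Poly_Mapping" "HOL-Computational_Algebra.Polynomial"
begin

(* Commutative multivariate polynomials: maps from exponent vectors (nat \<Rightarrow>\<^sub>0 nat)
   to coefficients; variable x_{i+1} of the paper is index i. *)
type_synonym 'a mpoly = "(nat \<Rightarrow>\<^sub>0 nat) \<Rightarrow>\<^sub>0 'a"

definition mdeg :: "(nat \<Rightarrow>\<^sub>0 nat) \<Rightarrow> nat" where
  "mdeg \<alpha> = (\<Sum>i\<in>Poly_Mapping.keys \<alpha>. Poly_Mapping.lookup \<alpha> i)"

definition mono_eval :: "(nat \<Rightarrow> 'a::comm_semiring_1) \<Rightarrow> (nat \<Rightarrow>\<^sub>0 nat) \<Rightarrow> 'a" where
  "mono_eval a \<alpha> = (\<Prod>i\<in>Poly_Mapping.keys \<alpha>. a i ^ Poly_Mapping.lookup \<alpha> i)"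

definition mpoly_eval :: "'a::comm_semiring_1 mpoly \<Rightarrow> (nat \<Rightarrow> 'a) \<Rightarrow> 'a" where
  "mpoly_eval p x = (\<Sum>\<alpha>\<in>Poly_Mapping.keys p. Poly_Mapping.lookup p \<alpha> * mono_eval x \<alpha>)"

definition mpoly_in_vars :: "nat \<Rightarrow> ('a::zero) mpoly \<Rightarrow> bool" where
  "mpoly_in_vars n p \<longleftrightarrow> (\<forall>\<alpha>\<in>Poly_Mapping.keys p. Poly_Mapping.keys \<alpha> \<subseteq> {..<n})"

definition homogeneous :: "nat \<Rightarrow> ('a::zero) mpoly \<Rightarrow> bool" where
  "homogeneous d p \<longleftrightarrow> (\<forall>\<alpha>\<in>Poly_Mapping.keys p. mdeg \<alpha> = d)"

definition mpoly_cnj :: "complex mpoly \<Rightarrow> complex mpoly" where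
  "mpoly_cnj p = Poly_Mapping.map cnj p"

(* h_{a,e}(t) = h(a - t e) as a univariate complex polynomial in t *)
definition h_ae :: "real mpoly \<Rightarrow> (nat \<Rightarrow> real) \<Rightarrow> (nat \<Rightarrow> real) \<Rightarrow> complex poly" where
  "h_ae h a e = (\<Sum>\<alpha>\<in>Poly_Mapping.keys h. smult (complex_of_real (Poly_Mapping.lookup h \<alpha>))
       (\<Prod>i\<in>Poly_Mapping.keys \<alpha>. [:complex_of_real (a i), - complex_of_real (e i):] ^ Poly_Mapping.lookup \<alpha> i))"

definition newton_sum :: "nat \<Rightarrow> complex poly \<Rightarrow> complex" where
  "newton_sum k p = (\<Sum>r\<in>{r. poly p r = 0}. of_nat (order r p) * r ^ k)"

(* Hermite matrix entry (i,j) of H_e(h): the polynomial N_{i+j}(h(x - t e)) in x,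
   written as sum_{|alpha| = i+j} c_alpha x^alpha *)
definition hermite_entry :: "nat \<Rightarrow> ((nat \<Rightarrow>\<^sub>0 nat) \<Rightarrow> complex) \<Rightarrow> nat \<Rightarrow> nat \<Rightarrow> complex mpoly" where
  "hermite_entry n c i j =
     (\<Sum>\<alpha>\<in>{\<alpha>. mdeg \<alpha> = i + j \<and> Poly_Mapping.keys \<alpha> \<subseteq> {..<n}}. Poly_Mapping.single \<alpha> (c \<alpha>))"

(* Free noncommutative algebra C<z_1..z_n>: finitely supported coefficient functions
   on words (lists of letter indices < n). *)
type_synonym ncpoly = "nat list \<Rightarrow> complex"

definition nc_alg :: "nat \<Rightarrow> ncpoly set" where
  "nc_alg n = {p. finite {w. p w \<noteq> 0} \<and> (\<forall>w. p w \<noteq> 0 \<longrightarrow> set w \<subseteq> {..<n})}"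

definition nc_add :: "ncpoly \<Rightarrow> ncpoly \<Rightarrow> ncpoly" where
  "nc_add p q = (\<lambda>w. p w + q w)"

definition nc_scale :: "complex \<Rightarrow> ncpoly \<Rightarrow> ncpoly" where
  "nc_scale c p = (\<lambda>w. c * p w)"

(* product: concatenation of words, extended bilinearly *)
definition nc_mult :: "ncpoly \<Rightarrow> ncpoly \<Rightarrow> ncpoly" where
  "nc_mult p q = (\<lambda>w. \<Sum>i\<le>length w. p (take i w) * q (drop i w))"

(* involution with z_i^* = z_i: conjugate coefficients, reverse words *)
definition nc_star :: "ncpoly \<Rightarrow> ncpoly" where
  "nc_star p = (\<lambda>w. cnj (p (rev w)))"

definition H_word :: "(nat \<Rightarrow>\<^sub>0 nat) \<Rightarrow> ncpoly" where
  "H_word \<alpha> = (\<lambda>w. if (\<forall>i. count_list w i = Poly_Mapping.lookup \<alpha> i) then 1 else 0)"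

definition positive_functional :: "nat \<Rightarrow> (ncpoly \<Rightarrow> complex) \<Rightarrow> bool" where
  "positive_functional n \<phi> \<longleftrightarrow>
     (\<forall>p\<in>nc_alg n. \<forall>q\<in>nc_alg n. \<phi> (nc_add p q) = \<phi> p + \<phi> q) \<and>
     (\<forall>c. \<forall>p\<in>nc_alg n. \<phi> (nc_scale c p) = c * \<phi> p) \<and>
     (\<forall>p\<in>nc_alg n. Im (\<phi> (nc_mult (nc_star p) p)) = 0 \<and> Re (\<phi> (nc_mult (nc_star p) p)) \<ge> 0)"

end

theory Submission
  imports Defs
begin


definition QF :: "'a set \<Rightarrow> ('a\<Rightarrow>'a\<Rightarrow>complex) \<Rightarrow> ('a\<Rightarrow>complex) \<Rightarrow> complex" where
 "QF I M u = (\<Sum>a\<in>I. \<Sum>b\<in>I. cnj (u a) * u b * M a b)"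
definition psd :: "'a set \<Rightarrow> ('a\<Rightarrow>'a\<Rightarrow>complex) \<Rightarrow> bool" where
 "psd I M = (\<forall>u. Im (QF I M u) = 0 \<and> 0 \<le> Re (QF I M u))"

lemma delta2:
  assumes "finite I" "a \<in> I" "b \<in> I"
  shows "(\<Sum>x\<in>I. \<Sum>y\<in>I. cnj (if x=a then s else 0) * (if y=b then t else 0) * M x y) = cnj s * t * M a b"
proof -
  have "(\<Sum>x\<in>I. \<Sum>y\<in>I. cnj (if x=a then s else 0) * (if y=b then t else 0) * M x y)
      = (\<Sum>x\<in>I. if x = a then (\<Sum>y\<in>I. if y = b then cnj s * t * M x y else 0) else 0)"
    by (auto intro!: sum.cong)
  also have "\<dots> = cnj s * t * M a b" using assms by (simp add: sum.delta)
  finally show ?thesis .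
qed

lemma QF_two:
  assumes "finite I" "a \<in> I" "b \<in> I"
  shows "QF I M (\<lambda>z. (if z=a then s else 0) + (if z=b then t else 0)) =
     cnj s*s*M a a + cnj s*t*M a b + cnj t*s*M b a + cnj t*t*M b b"
proof -
  let ?f = "\<lambda>z. (if z=a then s else 0)" and ?g = "\<lambda>z. (if z=b then t else 0)"
  have "QF I M (\<lambda>z. ?f z + ?g z) = (\<Sum>x\<in>I. \<Sum>y\<in>I. cnj (?f x) * ?f y * M x y)
    + (\<Sum>x\<in>I. \<Sum>y\<in>I. cnj (?f x) * ?g y * M x y) + (\<Sum>x\<in>I. \<Sum>y\<in>I. cnj (?g x) * ?f y * M x y)
    + (\<Sum>x\<in>I. \<Sum>y\<in>I. cnj (?g x) * ?g y * M x y)"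
    unfolding QF_def by (simp add: sum.distrib algebra_simps)
  then show ?thesis using assms by (simp only: delta2)
qed

lemma QF_insert:
  assumes "finite F" "x \<notin> F"
  shows "QF (insert x F) M u = cnj(u x)*u x*M x x + (\<Sum>b\<in>F. cnj(u x)*u b*M x b)
     + (\<Sum>a\<in>F. cnj(u a)*u x*M a x) + QF F M u"
  using assms by (simp add: QF_def sum.distrib algebra_simps)

lemma QF_cong: "(\<And>a. a \<in> I \<Longrightarrow> u a = v a) \<Longrightarrow> QF I M u = QF I M v"
  by (simp add: QF_def)

lemma psd_herm:
  assumes "finite I" "psd I M" "a \<in> I" "b \<in> I"
  shows "M b a = cnj (M a b)"
proof -
  have q: "Im (QF I M u) = 0" for u using assms(2) psd_def by blast
  have aa: "Im (M a a) = 0" using q[of "\<lambda>z. (if z=a then 1 else 0) + (if z=a then 0 else 0)"]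
    QF_two[OF assms(1,3,3), of M 1 0] by simp
  have bb: "Im (M b b) = 0" using q[of "\<lambda>z. (if z=b then 1 else 0) + (if z=b then 0 else 0)"]
    QF_two[OF assms(1,4,4), of M 1 0] by simp
  have 1: "Im (M a b + M b a) = 0" using q[of "\<lambda>z. (if z=a then 1 else 0) + (if z=b then 1 else 0)"]
    QF_two[OF assms(1,3,4), of M 1 1] aa bb by simp
  have 2: "Re (M a b - M b a) = 0" using q[of "\<lambda>z. (if z=a then 1 else 0) + (if z=b then \<i> else 0)"]
    QF_two[OF assms(1,3,4), of M 1 \<i>] aa bb by (simp add: algebra_simps)
  show ?thesis using 1 2 by (simp add: complex_eq_iff)
qed

lemma psd_diag:
  assumes "finite I" "psd I M" "a \<in> I"
  shows "M a a = complex_of_real (Re (M a a))" "Re (M a a) \<ge> 0"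
proof -
  have q: "Im (QF I M u) = 0 \<and> 0 \<le> Re (QF I M u)" for u using assms(2) psd_def by blast
  have "QF I M (\<lambda>z. (if z=a then 1 else 0) + (if z=a then 0 else 0)) = M a a"
    using QF_two[OF assms(1,3,3), of M 1 0] by simp
  then show "M a a = complex_of_real (Re (M a a))" "Re (M a a) \<ge> 0"
    using q[of "\<lambda>z. (if z=a then 1 else 0) + (if z=a then 0 else 0)"] by (auto simp: complex_eq_iff)
qed

lemma psd_factor:
  assumes "finite I" "psd I M"
  shows "\<exists>Bs. \<forall>a\<in>I. \<forall>b\<in>I. M a b = (\<Sum>B\<leftarrow>Bs. cnj (B a) * B b)"
  using assms
proof (induction I arbitrary: M rule: finite_induct)
  case empty
  then show ?case by auto
next
  case (insert x F)
  have fin: "finite (insert x F)" using insert by auto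
  have herm: "\<And>a b. a \<in> insert x F \<Longrightarrow> b \<in> insert x F \<Longrightarrow> M b a = cnj (M a b)"
    using psd_herm[OF fin insert.prems] by blast
  define m where "m = Re (M x x)"
  have Mxx: "M x x = complex_of_real m" and m0: "m \<ge> 0"
    using psd_diag[OF fin insert.prems, of x] m_def by auto
  have q: "\<And>u. Im (QF (insert x F) M u) = 0 \<and> 0 \<le> Re (QF (insert x F) M u)"
    using insert.prems psd_def by blast
  show ?case
  proof (cases "m = 0")
    case True
    have zero: "M x b = 0" if b: "b \<in> F" for b
    proof (rule ccontr)
      assume z: "M x b \<noteq> 0"
      define z where "z = M x b"
      define N where "N = Re z ^ 2 + Im z ^ 2"
      have N: "N > 0" using z unfolding N_def z_def
        by (simp add: complex_eq_iff sum_power2_gt_zero_iff)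
      define r where "r = (Re (M b b) + 1) / (2 * N)"
      define s where "s = - (complex_of_real r * z)"
      have Q: "QF (insert x F) M (\<lambda>y. (if y=x then s else 0) + (if y=b then 1 else 0)) =
         cnj s*s*M x x + cnj s*1*M x b + cnj 1*s*M b x + cnj 1*1*M b b"
        using QF_two[OF fin, of x b M s 1] b by auto
      have Mbx: "M b x = cnj z" using herm[of x b] b z_def by auto
      have "Re (QF (insert x F) M (\<lambda>y. (if y=x then s else 0) + (if y=b then 1 else 0)))
          = - 2 * r * N + Re (M b b)"
        unfolding Q Mbx using True Mxx by (simp add: s_def z_def[symmetric] N_def algebra_simps power2_eq_square)
      also have "\<dots> = -1" using N by (simp add: r_def field_simps)
      finally show False using q[of "\<lambda>y. (if y=x then s else 0) + (if y=b then 1 else 0)"] by simp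
    qed
    have "psd F M" unfolding psd_def
    proof
      fix u
      have "QF (insert x F) M (u(x:=0)) = QF F M (u(x:=0))"
        using QF_insert[OF insert(1,2), of M "u(x:=0)"] by simp
      also have "\<dots> = QF F M u" by (rule QF_cong) (use insert(2) in auto)
      finally show "Im (QF F M u) = 0 \<and> 0 \<le> Re (QF F M u)" using q[of "u(x:=0)"] by simp
    qed
    then obtain Bs where Bs: "\<forall>a\<in>F. \<forall>b\<in>F. M a b = (\<Sum>B\<leftarrow>Bs. cnj (B a) * B b)"
      using insert.IH by blast
    show ?thesis
    proof (intro exI[of _ "map (\<lambda>B. B(x:=0)) Bs"] ballI)
      fix a b assume a: "a \<in> insert x F" and b: "b \<in> insert x F"
      show "M a b = (\<Sum>B\<leftarrow>map (\<lambda>B. B(x:=0)) Bs. cnj (B a) * B b)"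
      proof (cases "a = x \<or> b = x")
        case True
        have "M a b = 0"
        proof (cases "a = x")
          case True then show ?thesis using zero b Mxx \<open>m = 0\<close> by auto
        next
          case False
          then have "b = x" "a \<in> F" using \<open>a = x \<or> b = x\<close> a by auto
          then show ?thesis using herm[of x a] zero by auto
        qed
        then show ?thesis using True by (cases "a = x") (auto simp: o_def)
      next
        case False
        then show ?thesis using Bs a b by (simp add: o_def)
      qed
    qed
  next
    case False
    then have mpos: "m > 0" using m0 by simp
    define M' where "M' a b = M a b - M a x * M x b / M x x" for a b
    have "psd F M'" unfolding psd_def
    proof
      fix u
      define S where "S = (\<Sum>b\<in>F. M x b * u b)"
      define t where "t = - S / M x x"
      define u' where "u' = u(x := t)"
      have u'F: "\<And>a. a \<in> F \<Longrightarrow> u' a = u a" using insert(2) u'_def by auto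
      have e1: "(\<Sum>b\<in>F. cnj(u' x)*u' b*M x b) = cnj t * S"
        unfolding S_def sum_distrib_left by (rule sum.cong) (use insert(2) in \<open>auto simp: u'_def\<close>)
      have e2: "(\<Sum>a\<in>F. cnj(u' a)*u' x*M a x) = t * cnj S"
        unfolding S_def cnj_sum
        unfolding sum_distrib_left
      proof (rule sum.cong)
        fix a assume "a \<in> F"
        then show "cnj (u' a) * u' x * M a x = t * cnj (M x a * u a)"
          using herm[of x a] insert(2) by (auto simp: u'_def)
      qed simp
      have e3: "QF F M u' = QF F M u" by (rule QF_cong) (simp add: u'F)
      have e4: "QF F M' u = QF F M u - cnj S * S / M x x"
      proof -
        have "QF F M' u = QF F M u - (\<Sum>a\<in>F. \<Sum>b\<in>F. cnj (u a) * u b * (M a x * M x b / M x x))"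
          unfolding QF_def M'_def by (simp add: algebra_simps sum_subtractf)
        also have "(\<Sum>a\<in>F. \<Sum>b\<in>F. cnj (u a) * u b * (M a x * M x b / M x x))
            = (\<Sum>a\<in>F. cnj (u a) * M a x) * (\<Sum>b\<in>F. u b * M x b) / M x x"
          unfolding sum_product sum_divide_distrib
          by (intro sum.cong refl) (simp add: algebra_simps)
        also have "(\<Sum>a\<in>F. cnj (u a) * M a x) = cnj S"
          unfolding S_def cnj_sum
        proof (rule sum.cong)
          fix a assume "a \<in> F"
          then show "cnj (u a) * M a x = cnj (M x a * u a)" using herm[of x a] by simp
        qed simp
        finally show ?thesis by (simp add: S_def algebra_simps)
      qed
      have ux: "u' x = t" by (simp add: u'_def)
      have "QF (insert x F) M u' = cnj(u' x)*u' x*M x x + cnj t * S + t * cnj S + QF F M u"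
        by (subst QF_insert[OF insert(1,2)]) (simp only: e1 e2 e3)
      also have "\<dots> = cnj t * t * complex_of_real m + cnj t * S + t * cnj S + QF F M u"
        by (simp only: ux Mxx)
      also have "\<dots> = QF F M' u"
      proof -
        have ct: "cnj t = - cnj S / complex_of_real m" by (simp add: t_def Mxx)
        have m0: "complex_of_real m \<noteq> 0" using mpos by simp
        show ?thesis unfolding e4 ct using m0 by (simp add: t_def Mxx field_simps)
      qed
      finally have "QF (insert x F) M u' = QF F M' u" .
      then show "Im (QF F M' u) = 0 \<and> 0 \<le> Re (QF F M' u)" using q[of u'] by simp
    qed
    then obtain Bs where Bs: "\<forall>a\<in>F. \<forall>b\<in>F. M' a b = (\<Sum>B\<leftarrow>Bs. cnj (B a) * B b)"
      using insert.IH by blast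
    define B0 where "B0 a = M x a / complex_of_real (sqrt m)" for a
    have B0: "cnj (B0 a) * B0 b = M a x * M x b / M x x" if "a \<in> insert x F" for a b
    proof -
      have Hax: "M a x = cnj (M x a)" using herm[of x a] that by simp
      have "cnj (B0 a) * B0 b = cnj (M x a) * M x b / complex_of_real m"
        unfolding B0_def using mpos by (simp add: field_simps flip: of_real_mult)
      then show ?thesis by (simp only: Hax Mxx)
    qed
    show ?thesis
    proof (intro exI[of _ "B0 # map (\<lambda>B. B(x:=0)) Bs"] ballI)
      fix a b assume a: "a \<in> insert x F" and b: "b \<in> insert x F"
      show "M a b = (\<Sum>B\<leftarrow>B0 # map (\<lambda>B. B(x:=0)) Bs. cnj (B a) * B b)"
      proof (cases "a = x \<or> b = x")
        case True
        have "M a x * M x b / M x x = M a b" using True Mxx mpos by auto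
        then show ?thesis using True B0[OF a] by (cases "a = x") (auto simp: o_def)
      next
        case False
        have e: "M a b - M a x * M x b / M x x = (\<Sum>B\<leftarrow>Bs. cnj (B a) * B b)"
          using Bs a b False unfolding M'_def by auto
        have e2: "(\<Sum>B\<leftarrow>map (\<lambda>B. B(x:=0)) Bs. cnj (B a) * B b) = (\<Sum>B\<leftarrow>Bs. cnj (B a) * B b)"
          using False by (simp add: o_def)
        have "(\<Sum>B\<leftarrow>B0 # map (\<lambda>B. B(x:=0)) Bs. cnj (B a) * B b)
            = cnj (B0 a) * B0 b + (\<Sum>B\<leftarrow>map (\<lambda>B. B(x:=0)) Bs. cnj (B a) * B b)" by simp
        also have "\<dots> = M a x * M x b / M x x + (M a b - M a x * M x b / M x x)"
          by (simp only: e2 B0[OF a, of b] e)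
        finally show ?thesis by simp
      qed
    qed
  qed
qed



definition delta :: "nat list \<Rightarrow> ncpoly" where "delta u = (\<lambda>w. if w = u then 1 else 0)"
definition expo :: "nat list \<Rightarrow> (nat \<Rightarrow>\<^sub>0 nat)" where
  "expo w = sum_list (map (\<lambda>k. Poly_Mapping.single k 1) w)"
definition Wd :: "nat \<Rightarrow> nat \<Rightarrow> nat list set" where
  "Wd n m = {w. set w \<subseteq> {..<n} \<and> length w = m}"

lemma lookup_expo: "Poly_Mapping.lookup (expo w) i = count_list w i"
  by (induction w) (auto simp: expo_def lookup_add lookup_single when_def)

lemma expo_append: "expo (xs @ ys) = expo xs + expo ys"
  by (simp add: expo_def)

lemma expo_rev: "expo (rev w) = expo w"
  by (rule poly_mapping_eqI) (simp add: lookup_expo)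

lemma keys_expo: "Poly_Mapping.keys (expo w) = set w"
  by (auto simp: in_keys_iff lookup_expo count_list_0_iff)

lemma mdeg_expo: "mdeg (expo w) = length w"
  by (simp add: mdeg_def keys_expo lookup_expo sum_count_set)

lemma finite_Wd: "finite (Wd n m)"
  unfolding Wd_def by (rule finite_lists_length_eq) simp

lemma count_replicate: "count_list (replicate a i) j = (if i = j then a else 0)"
  by (induction a) auto

lemma count_concat_rep:
  "count_list (concat (map (\<lambda>i. replicate (f i) i) [0..<k])) j = (if j < k then f j else 0)"
  by (induction k) (auto simp: count_replicate)

lemma expo_surj:
  assumes "Poly_Mapping.keys \<alpha> \<subseteq> {..<n}"
  shows "\<exists>w. set w \<subseteq> {..<n} \<and> expo w = \<alpha>"
proof (intro exI conjI)
  let ?w = "concat (map (\<lambda>i. replicate (Poly_Mapping.lookup \<alpha> i) i) [0..<n])"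
  show "set ?w \<subseteq> {..<n}" by auto
  show "expo ?w = \<alpha>"
  proof (rule poly_mapping_eqI)
    fix j show "Poly_Mapping.lookup (expo ?w) j = Poly_Mapping.lookup \<alpha> j"
      using assms by (auto simp: lookup_expo count_concat_rep in_keys_iff)
  qed
qed

lemma finite_S: "finite {\<alpha>. mdeg \<alpha> = m \<and> Poly_Mapping.keys \<alpha> \<subseteq> {..<n}}"
proof (rule finite_subset[OF _ finite_imageI[OF finite_Wd[of n m], of expo]])
  show "{\<alpha>. mdeg \<alpha> = m \<and> Poly_Mapping.keys \<alpha> \<subseteq> {..<n}} \<subseteq> expo ` Wd n m"
  proof
    fix \<alpha> assume "\<alpha> \<in> {\<alpha>. mdeg \<alpha> = m \<and> Poly_Mapping.keys \<alpha> \<subseteq> {..<n}}"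
    then have a: "mdeg \<alpha> = m" "Poly_Mapping.keys \<alpha> \<subseteq> {..<n}" by auto
    obtain w where w: "set w \<subseteq> {..<n}" "expo w = \<alpha>" using expo_surj[OF a(2)] by blast
    have "length w = m" using mdeg_expo[of w] w a by simp
    then show "\<alpha> \<in> expo ` Wd n m" using w by (auto simp: Wd_def)
  qed
qed

lemma nc_sum_in:
  assumes "finite K" "\<forall>k\<in>K. f k \<in> nc_alg n"
  shows "(\<lambda>w. \<Sum>k\<in>K. a k * f k w) \<in> nc_alg n"
proof -
  have sub: "{w. (\<Sum>k\<in>K. a k * f k w) \<noteq> 0} \<subseteq> (\<Union>k\<in>K. {w. f k w \<noteq> 0})"
  proof
    fix w assume "w \<in> {w. (\<Sum>k\<in>K. a k * f k w) \<noteq> 0}"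
    then obtain k where "k \<in> K" "a k * f k w \<noteq> 0" by (auto elim: sum.not_neutral_contains_not_neutral)
    then show "w \<in> (\<Union>k\<in>K. {w. f k w \<noteq> 0})" by auto
  qed
  have "finite (\<Union>k\<in>K. {w. f k w \<noteq> 0})" using assms by (auto simp: nc_alg_def)
  moreover have "set w \<subseteq> {..<n}" if "(\<Sum>k\<in>K. a k * f k w) \<noteq> 0" for w
    using sub that assms by (auto simp: nc_alg_def)
  ultimately show ?thesis using sub by (auto simp: nc_alg_def intro: finite_subset)
qed

lemma phi_sum:
  assumes pf: "positive_functional n \<phi>" and "finite K" "\<forall>k\<in>K. f k \<in> nc_alg n"
  shows "\<phi> (\<lambda>w. \<Sum>k\<in>K. a k * f k w) = (\<Sum>k\<in>K. a k * \<phi> (f k))"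
  using assms(2,3)
proof (induction K rule: finite_induct)
  case empty
  have z: "(\<lambda>w::nat list. 0::complex) \<in> nc_alg n" by (simp add: nc_alg_def)
  have "\<phi> (nc_scale 0 (\<lambda>w. 0)) = 0" using pf z unfolding positive_functional_def by simp
  then show ?case by (simp add: nc_scale_def)
next
  case (insert k K)
  have "(\<lambda>w. \<Sum>k\<in>insert k K. a k * f k w) = nc_add (nc_scale (a k) (f k)) (\<lambda>w. \<Sum>k\<in>K. a k * f k w)"
    using insert by (simp add: nc_add_def nc_scale_def fun_eq_iff)
  moreover have "nc_scale (a k) (f k) \<in> nc_alg n"
    using nc_sum_in[of "{k}" f n "\<lambda>_. a k"] insert.prems by (simp add: nc_scale_def)
  moreover have "(\<lambda>w. \<Sum>k\<in>K. a k * f k w) \<in> nc_alg n" using nc_sum_in insert by auto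
  ultimately show ?case using pf insert unfolding positive_functional_def by simp
qed

lemma delta_in: "set u \<subseteq> {..<n} \<Longrightarrow> delta u \<in> nc_alg n"
  by (auto simp: delta_def nc_alg_def)

lemma split_count:
  "(\<Sum>i\<le>length w. if take i w = x \<and> drop i w = y then 1 else 0) = (if w = x @ y then 1 else (0::complex))"
proof -
  have "(\<Sum>i\<le>length w. if take i w = x \<and> drop i w = y then 1 else (0::complex))
      = (\<Sum>i\<le>length w. if i = length x then (if w = x @ y then 1 else 0) else 0)"
  proof (rule sum.cong)
    fix i assume i: "i \<in> {..length w}"
    show "(if take i w = x \<and> drop i w = y then 1 else (0::complex)) = (if i = length x then (if w = x @ y then 1 else 0) else 0)"
    proof -
      have "(take i w = x \<and> drop i w = y) \<longleftrightarrow> (i = length x \<and> w = x @ y)"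
      proof
        assume h: "take i w = x \<and> drop i w = y"
        then have "length x = i" using i by auto
        moreover have "w = x @ y" using h append_take_drop_id[of i w] by simp
        ultimately show "i = length x \<and> w = x @ y" by simp
      next
        assume "i = length x \<and> w = x @ y"
        then show "take i w = x \<and> drop i w = y" by simp
      qed
      then show ?thesis by auto
    qed
  qed simp
  also have "\<dots> = (if w = x @ y then 1 else 0)" by (auto simp: sum.delta)
  finally show ?thesis .
qed

lemma M_psd:
  assumes pf: "positive_functional n \<phi>"
  shows "psd {w. set w \<subseteq> {..<n} \<and> length w < d} (\<lambda>a b. \<phi> (delta (rev a @ b)))"
  unfolding psd_def
proof
  fix u
  define I where "I = {w. set w \<subseteq> {..<n} \<and> length w < d}"
  have finI: "finite I" unfolding I_def
    by (rule finite_subset[OF _ finite_lists_length_le[of "{..<n}" d]]) auto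
  define p where "p = (\<lambda>w. \<Sum>b\<in>I. u b * delta b w)"
  have pin: "p \<in> nc_alg n" unfolding p_def using finI by (intro nc_sum_in) (auto simp: I_def delta_in)
  define F where "F = (\<lambda>ab. cnj (u (fst ab)) * u (snd ab))"
  have eq: "nc_mult (nc_star p) p = (\<lambda>w. \<Sum>ab\<in>I\<times>I. F ab * delta (rev (fst ab) @ snd ab) w)"
  proof (rule ext)
    fix w
    have "nc_mult (nc_star p) p w = (\<Sum>i\<in>{..length w}. \<Sum>a\<in>I. \<Sum>b\<in>I.
        cnj (u a) * u b * (if take i w = rev a \<and> drop i w = b then 1 else 0))"
      unfolding nc_mult_def nc_star_def p_def delta_def cnj_sum sum_product
      by (intro sum.cong refl) auto
    also have "\<dots> = (\<Sum>a\<in>I. \<Sum>i\<in>{..length w}. \<Sum>b\<in>I.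
        cnj (u a) * u b * (if take i w = rev a \<and> drop i w = b then 1 else 0))"
      by (rule sum.swap)
    also have "\<dots> = (\<Sum>a\<in>I. \<Sum>b\<in>I. \<Sum>i\<in>{..length w}.
        cnj (u a) * u b * (if take i w = rev a \<and> drop i w = b then 1 else 0))"
      by (intro sum.cong refl sum.swap)
    also have "\<dots> = (\<Sum>a\<in>I. \<Sum>b\<in>I. cnj (u a) * u b * (if w = rev a @ b then 1 else 0))"
      by (simp only: sum_distrib_left[symmetric] split_count)
    also have "\<dots> = (\<Sum>ab\<in>I\<times>I. F ab * delta (rev (fst ab) @ snd ab) w)"
      unfolding sum.cartesian_product F_def delta_def by (intro sum.cong refl) auto
    finally show "nc_mult (nc_star p) p w = (\<Sum>ab\<in>I\<times>I. F ab * delta (rev (fst ab) @ snd ab) w)" .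
  qed
  have "\<phi> (nc_mult (nc_star p) p) = (\<Sum>ab\<in>I\<times>I. F ab * \<phi> (delta (rev (fst ab) @ snd ab)))"
    unfolding eq using finI by (intro phi_sum[OF pf]) (auto simp: I_def intro!: delta_in)
  also have "\<dots> = QF I (\<lambda>a b. \<phi> (delta (rev a @ b))) u"
    unfolding QF_def sum.cartesian_product F_def by (intro sum.cong refl) auto
  finally have "\<phi> (nc_mult (nc_star p) p) = QF I (\<lambda>a b. \<phi> (delta (rev a @ b))) u" .
  then show "Im (QF {w. set w \<subseteq> {..<n} \<and> length w < d} (\<lambda>a b. \<phi> (delta (rev a @ b))) u) = 0 \<and>
         0 \<le> Re (QF {w. set w \<subseteq> {..<n} \<and> length w < d} (\<lambda>a b. \<phi> (delta (rev a @ b))) u)"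
    using pf pin unfolding positive_functional_def I_def by metis
qed

lemma lookup_mpoly_cnj: "Poly_Mapping.lookup (mpoly_cnj p) k = cnj (Poly_Mapping.lookup p k)"
  by (simp add: mpoly_cnj_def map.rep_eq when_def)

lemma mpoly_cnj_sum: "mpoly_cnj (sum f A) = (\<Sum>a\<in>A. mpoly_cnj (f a))"
  by (rule poly_mapping_eqI) (simp add: lookup_mpoly_cnj lookup_sum)

lemma mpoly_cnj_single: "mpoly_cnj (Poly_Mapping.single k a) = Poly_Mapping.single k (cnj a)"
  by (simp add: mpoly_cnj_def)

lemma single_sum: "Poly_Mapping.single k (sum f A) = (\<Sum>a\<in>A. Poly_Mapping.single k (f a))"
  by (rule poly_mapping_eqI) (simp add: lookup_sum lookup_single when_def)



theorem proposition4p2: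
  fixes n d :: nat
    and h :: "real mpoly"
    and e :: "nat \<Rightarrow> real"
    and c :: "(nat \<Rightarrow>\<^sub>0 nat) \<Rightarrow> complex"
    and \<phi> :: "ncpoly \<Rightarrow> complex"
  assumes h_vars: "mpoly_in_vars n h"
    and h_hom: "homogeneous d h"
    and h_e: "mpoly_eval h e \<noteq> 0"
    and c_def: "\<And>k a. newton_sum k (h_ae h a e) =
                  (\<Sum>\<alpha>\<in>{\<alpha>. mdeg \<alpha> = k \<and> Poly_Mapping.keys \<alpha> \<subseteq> {..<n}}.
                      c \<alpha> * mono_eval (\<lambda>i. complex_of_real (a i)) \<alpha>)"
    and \<phi>_pos: "positive_functional n \<phi>"
    and \<phi>_mom: "\<And>\<alpha>. Poly_Mapping.keys \<alpha> \<subseteq> {..<n} \<Longrightarrow> int (mdeg \<alpha>) \<le> 2 * (int d - 1) \<Longrightarrow>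
                  \<phi> (H_word \<alpha>) = c \<alpha>"
  shows "\<exists>As :: (nat \<times> (nat \<Rightarrow> nat \<Rightarrow> complex mpoly)) list.
           (\<forall>(r, A)\<in>set As. \<forall>k<r. \<forall>i<d. mpoly_in_vars n (A k i)) \<and>
           (\<forall>i<d. \<forall>j<d. hermite_entry n c i j =
               (\<Sum>(r, A)\<leftarrow>As. \<Sum>k<r. mpoly_cnj (A k i) * A k j))"
proof -
  define I where "I = {w. set w \<subseteq> {..<n} \<and> length w < d}"
  have finI: "finite I" unfolding I_def
    by (rule finite_subset[OF _ finite_lists_length_le[of "{..<n}" d]]) auto
  obtain Bs where Bs: "\<forall>a\<in>I. \<forall>b\<in>I. \<phi> (delta (rev a @ b)) = (\<Sum>B\<leftarrow>Bs. cnj (B a) * B b)"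
    using psd_factor[OF finI M_psd[OF \<phi>_pos, of d, folded I_def]] by blast
  define r where "r = length Bs"
  define A where "A k i = (\<Sum>w\<in>Wd n i. Poly_Mapping.single (expo w) ((Bs!k) w))" for k i
  define G where "G u = Poly_Mapping.single (expo u) (\<phi> (delta u))" for u
  have WI: "\<And>i w. i < d \<Longrightarrow> w \<in> Wd n i \<Longrightarrow> w \<in> I" by (auto simp: Wd_def I_def)
  have part1: "mpoly_in_vars n (A k i)" for k i
    unfolding mpoly_in_vars_def
  proof
    fix \<alpha> assume "\<alpha> \<in> Poly_Mapping.keys (A k i)"
    then have "\<alpha> \<in> (\<Union>w\<in>Wd n i. Poly_Mapping.keys (Poly_Mapping.single (expo w) ((Bs!k) w)))"
      unfolding A_def by (rule subsetD[OF keys_sum])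
    then obtain w where "w \<in> Wd n i" "\<alpha> \<in> Poly_Mapping.keys (Poly_Mapping.single (expo w) ((Bs!k) w))"
      by blast
    then show "Poly_Mapping.keys \<alpha> \<subseteq> {..<n}"
      by (auto simp: keys_expo Wd_def split: if_splits)
  qed
  have R: "(\<Sum>k<r. mpoly_cnj (A k i) * A k j) = (\<Sum>u\<in>Wd n (i+j). G u)" if ij: "i < d" "j < d" for i j
  proof -
    have "(\<Sum>k<r. mpoly_cnj (A k i) * A k j) = (\<Sum>k<r. \<Sum>w\<in>Wd n i. \<Sum>v\<in>Wd n j.
         Poly_Mapping.single (expo w + expo v) (cnj ((Bs!k) w) * (Bs!k) v))"
      unfolding A_def mpoly_cnj_sum mpoly_cnj_single sum_product mult_single by simp
    also have "\<dots> = (\<Sum>w\<in>Wd n i. \<Sum>k<r. \<Sum>v\<in>Wd n j.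
         Poly_Mapping.single (expo w + expo v) (cnj ((Bs!k) w) * (Bs!k) v))"
      by (rule sum.swap)
    also have "\<dots> = (\<Sum>w\<in>Wd n i. \<Sum>v\<in>Wd n j. \<Sum>k<r.
         Poly_Mapping.single (expo w + expo v) (cnj ((Bs!k) w) * (Bs!k) v))"
      by (intro sum.cong refl sum.swap)
    also have "\<dots> = (\<Sum>w\<in>Wd n i. \<Sum>v\<in>Wd n j. G (rev w @ v))"
    proof (intro sum.cong refl)
      fix w v assume w: "w \<in> Wd n i" and v: "v \<in> Wd n j"
      have "\<phi> (delta (rev w @ v)) = (\<Sum>B\<leftarrow>Bs. cnj (B w) * B v)"
        using Bs WI[OF ij(1) w] WI[OF ij(2) v] by blast
      also have "\<dots> = (\<Sum>k<r. cnj ((Bs!k) w) * (Bs!k) v)"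
        unfolding r_def sum_list_sum_nth by (simp add: atLeast0LessThan)
      finally show "(\<Sum>k<r. Poly_Mapping.single (expo w + expo v) (cnj ((Bs!k) w) * (Bs!k) v)) = G (rev w @ v)"
        unfolding G_def single_sum[symmetric] by (simp add: expo_append expo_rev)
    qed
    also have "\<dots> = (\<Sum>wv\<in>Wd n i \<times> Wd n j. G ((\<lambda>(w,v). rev w @ v) wv))"
      unfolding sum.cartesian_product by (intro sum.cong refl) auto
    also have "\<dots> = (\<Sum>u\<in>Wd n (i+j). G u)"
    proof (rule sum.reindex_bij_betw)
      show "bij_betw (\<lambda>(w,v). rev w @ v) (Wd n i \<times> Wd n j) (Wd n (i+j))"
        unfolding bij_betw_def
      proof
        show "inj_on (\<lambda>(w,v). rev w @ v) (Wd n i \<times> Wd n j)"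
          by (auto simp: inj_on_def Wd_def append_eq_append_conv)
        show "(\<lambda>(w,v). rev w @ v) ` (Wd n i \<times> Wd n j) = Wd n (i+j)"
        proof
          show "(\<lambda>(w,v). rev w @ v) ` (Wd n i \<times> Wd n j) \<subseteq> Wd n (i+j)"
            by (auto simp: Wd_def)
          show "Wd n (i+j) \<subseteq> (\<lambda>(w,v). rev w @ v) ` (Wd n i \<times> Wd n j)"
          proof
            fix u assume u: "u \<in> Wd n (i+j)"
            have "(rev (take i u), drop i u) \<in> Wd n i \<times> Wd n j"
              using u set_take_subset[of i u] set_drop_subset[of i u] by (auto simp: Wd_def)
            moreover have "u = (\<lambda>(w,v). rev w @ v) (rev (take i u), drop i u)" by simp
            ultimately show "u \<in> (\<lambda>(w,v). rev w @ v) ` (Wd n i \<times> Wd n j)" by blast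
          qed
        qed
      qed
    qed
    finally show ?thesis .
  qed
  have L: "hermite_entry n c i j = (\<Sum>u\<in>Wd n (i+j). G u)" if ij: "i < d" "j < d" for i j
  proof -
    define S where "S = {\<alpha>. mdeg \<alpha> = i + j \<and> Poly_Mapping.keys \<alpha> \<subseteq> {..<n}}"
    have "hermite_entry n c i j = (\<Sum>\<alpha>\<in>S. Poly_Mapping.single \<alpha> (c \<alpha>))"
      unfolding hermite_entry_def S_def ..
    also have "\<dots> = (\<Sum>\<alpha>\<in>S. \<Sum>u\<in>{u. u \<in> Wd n (i+j) \<and> expo u = \<alpha>}. G u)"
    proof (rule sum.cong[OF refl])
      fix \<alpha> assume a: "\<alpha> \<in> S"
      have "c \<alpha> = \<phi> (H_word \<alpha>)"
        using a ij by (intro \<phi>_mom[symmetric]) (auto simp: S_def)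
      also have "H_word \<alpha> = (\<lambda>w. \<Sum>u\<in>{u. u \<in> Wd n (i+j) \<and> expo u = \<alpha>}. 1 * delta u w)"
      proof (rule ext)
        fix w
        have iff: "(\<forall>k. count_list w k = Poly_Mapping.lookup \<alpha> k) \<longleftrightarrow> (w \<in> Wd n (i+j) \<and> expo w = \<alpha>)"
        proof
          assume cnt: "\<forall>k. count_list w k = Poly_Mapping.lookup \<alpha> k"
          then have ew: "expo w = \<alpha>" by (intro poly_mapping_eqI) (simp add: lookup_expo)
          then have "set w \<subseteq> {..<n}" "length w = i + j"
            using a keys_expo[of w] mdeg_expo[of w] by (auto simp: S_def)
          then show "w \<in> Wd n (i+j) \<and> expo w = \<alpha>" using ew by (simp add: Wd_def)
        next
          assume "w \<in> Wd n (i+j) \<and> expo w = \<alpha>"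
          then show "\<forall>k. count_list w k = Poly_Mapping.lookup \<alpha> k" by (auto simp: lookup_expo)
        qed
        have fin: "finite {u. u \<in> Wd n (i+j) \<and> expo u = \<alpha>}"
          by (rule finite_subset[OF _ finite_Wd[of n "i+j"]]) auto
        show "H_word \<alpha> w = (\<Sum>u\<in>{u. u \<in> Wd n (i+j) \<and> expo u = \<alpha>}. 1 * delta u w)"
          unfolding H_word_def delta_def using iff fin by (simp add: sum.delta')
      qed
      also have "\<phi> \<dots> = (\<Sum>u\<in>{u. u \<in> Wd n (i+j) \<and> expo u = \<alpha>}. 1 * \<phi> (delta u))"
      proof (rule phi_sum[OF \<phi>_pos])
        show "finite {u. u \<in> Wd n (i+j) \<and> expo u = \<alpha>}"
          by (rule finite_subset[OF _ finite_Wd[of n "i+j"]]) auto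
      qed (auto simp: Wd_def intro!: delta_in)
      finally show "Poly_Mapping.single \<alpha> (c \<alpha>) = (\<Sum>u\<in>{u. u \<in> Wd n (i+j) \<and> expo u = \<alpha>}. G u)"
        by (simp add: single_sum G_def)
    qed
    also have "\<dots> = (\<Sum>u\<in>Wd n (i+j). G u)"
    proof (rule sum.group[OF finite_Wd])
      show "finite S" unfolding S_def by (rule finite_S)
      show "expo ` Wd n (i+j) \<subseteq> S" by (auto simp: S_def Wd_def mdeg_expo keys_expo)
    qed
    finally show ?thesis .
  qed
  show ?thesis
  proof (intro exI[of _ "[(r, A)]"] conjI)
    show "\<forall>(r, A)\<in>set [(r, A)]. \<forall>k<r. \<forall>i<d. mpoly_in_vars n (A k i)" using part1 by simp
    show "\<forall>i<d. \<forall>j<d. hermite_entry n c i j = (\<Sum>(r, A)\<leftarrow>[(r, A)]. \<Sum>k<r. mpoly_cnj (A k i) * A k j)"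
      using L R by simp
  qed
qed


end
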